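(* Let $q$ be a power of a prime $p$, let $n \in \mathbb{N}$, and let $S \subseteq \{0,1,\ldots,n\}$, $S \neq \emptyset$. If $q = 2$, further assume $0 \notin S$ and $n \notin S$. Then for all $i \in \mathbb{Z}_{q^n-1}$, $\delta_{n-S}(i) = \delta_S(Q_n - i)$, where $Q_n = (q^n-1)/(q-1)$. Hence $\delta_{n-S}$ is a shift of the reversal of $\delta_S$.
   Context: Define $\Omega(0) = \{0\} \subseteq \mathbb{Z}_{q^n-1}$ and, for $1 \le w \le n$, $\Omega(w)$ is the set of $k \in \mathbb{Z}_{q^n-1}$ whose canonical representative in $\{0,1,\ldots,q^n-2\}$ equals $q^{i_1} + \cdots + q^{i_w}$ for some integers $0 \le i_1 < \cdots < i_w \le n-1$. For $W \subseteq \{0,\ldots,n\}$, $\Omega(W) = \bigcup_{w \in W}\Omega(w)$ and $\delta_W : \mathbb{Z}_{q^n-1} \to \{0,1\} \subseteq \mathbb{F}_p$ is the indicator function of $\Omega(W)$. Also $n - S := \{n - s : s \in S\}$. For $f : \mathbb{Z}_N \to \mathbb{F}_q$, the $k$-shift of $f$ is $i \mapsto f(i+k)$ and the reversal of $f$ is $i \mapsto f(-(1+i))$. *)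

theory Defs
  imports "HOL-Computational_Algebra.Primes"
begin

text \<open>Elements of Z_{q^n-1} are represented by integers; the canonical
representative of k is k mod (q^n - 1), lying in {0..q^n-2}.\<close>

definition modulus :: "nat \<Rightarrow> nat \<Rightarrow> int" where
  "modulus q n = int (q ^ n) - 1"

definition Qn :: "nat \<Rightarrow> nat \<Rightarrow> int" where
  "Qn q n = (int (q ^ n) - 1) div (int q - 1)"

definition Omega :: "nat \<Rightarrow> nat \<Rightarrow> nat \<Rightarrow> int set" where
  "Omega q n w =
     (if w = 0 then {0}
      else {k. 0 \<le> k \<and> k < modulus q n \<and>
               (\<exists>I. I \<subseteq> {0..<n} \<and> card I = w \<and> k = (\<Sum>i\<in>I. int q ^ i))})"

definition OmegaW :: "nat \<Rightarrow> nat \<Rightarrow> nat set \<Rightarrow> int set" where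
  "OmegaW q n W = (\<Union>w\<in>W. Omega q n w)"

definition delta :: "nat \<Rightarrow> nat \<Rightarrow> nat set \<Rightarrow> int \<Rightarrow> int" where
  "delta q n W k = (if k mod modulus q n \<in> OmegaW q n W then 1 else 0)"

end

theory Submission
  imports Defs
begin

lemma Qn_sum:
  assumes "q \<ge> 2"
  shows "Qn q n = (\<Sum>i<n. int q ^ i)"
proof -
  have "(\<Sum>i<n. int q ^ i) * (int q - 1) = int q ^ n - 1"
    by (metis mult.commute one_diff_power_eq minus_diff_eq mult_minus_left)
  moreover have "int q - 1 \<noteq> 0" using assms by simp
  ultimately show ?thesis unfolding Qn_def
    by (metis nonzero_mult_div_cancel_right of_nat_power)
qed

lemma Omega_char:
  assumes "q \<ge> 2" "n \<ge> 1"
  shows "k \<in> OmegaW q n W \<longleftrightarrow> 0 \<le> k \<and> k < modulus q n \<and>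
     (\<exists>I. I \<subseteq> {0..<n} \<and> card I \<in> W \<and> k = (\<Sum>i\<in>I. int q ^ i))"
proof -
  have "q ^ n \<ge> 2 ^ n" using assms by (simp add: power_mono)
  moreover have "(2::nat) ^ n \<ge> 2" using assms
    by (metis One_nat_def power_increasing_iff power_one_right one_less_numeral_iff semiring_norm(76) Suc_le_eq)
  ultimately have M: "modulus q n > 0" unfolding modulus_def by linarith
  have *: "\<And>w. k \<in> Omega q n w \<longleftrightarrow> 0 \<le> k \<and> k < modulus q n \<and>
     (\<exists>I. I \<subseteq> {0..<n} \<and> card I = w \<and> k = (\<Sum>i\<in>I. int q ^ i))"
  proof -
    fix w
    show "k \<in> Omega q n w \<longleftrightarrow> 0 \<le> k \<and> k < modulus q n \<and>
     (\<exists>I. I \<subseteq> {0..<n} \<and> card I = w \<and> k = (\<Sum>i\<in>I. int q ^ i))"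
    proof (cases "w = 0")
      case True
      have e: "(\<exists>I. I \<subseteq> {0..<n} \<and> card I = w \<and> k = (\<Sum>i\<in>I. int q ^ i)) \<longleftrightarrow> k = 0"
      proof
        assume "\<exists>I. I \<subseteq> {0..<n} \<and> card I = w \<and> k = (\<Sum>i\<in>I. int q ^ i)"
        then obtain I where "I \<subseteq> {0..<n}" "card I = 0" "k = (\<Sum>i\<in>I. int q ^ i)"
          using True by blast
        moreover then have "I = {}"
          by (metis card_0_eq finite_atLeastLessThan finite_subset)
        ultimately show "k = 0" by simp
      next
        assume "k = 0"
        thus "\<exists>I. I \<subseteq> {0..<n} \<and> card I = w \<and> k = (\<Sum>i\<in>I. int q ^ i)"
          using True by (intro exI[of _ "{}"]) simp
      qed
      have "Omega q n w = {0}" using True by (simp add: Omega_def)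
      hence "k \<in> Omega q n w \<longleftrightarrow> k = 0" by simp
      then show ?thesis using e M by auto
    next
      case False
      have "Omega q n w = {k. 0 \<le> k \<and> k < modulus q n \<and>
               (\<exists>I. I \<subseteq> {0..<n} \<and> card I = w \<and> k = (\<Sum>i\<in>I. int q ^ i))}"
        using False by (simp add: Omega_def)
      then show ?thesis by (simp only: mem_Collect_eq)
    qed
  qed
  have "k \<in> OmegaW q n W \<longleftrightarrow> (\<exists>w\<in>W. k \<in> Omega q n w)"
    by (simp add: OmegaW_def)
  also have "\<dots> \<longleftrightarrow> (\<exists>w\<in>W. 0 \<le> k \<and> k < modulus q n \<and>
     (\<exists>I. I \<subseteq> {0..<n} \<and> card I = w \<and> k = (\<Sum>i\<in>I. int q ^ i)))" by (simp only: *)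
  finally show ?thesis by blast
qed

lemma sum_compl:
  assumes "I \<subseteq> {0..<n}"
  shows "(\<Sum>i\<in>{0..<n} - I. int q ^ i) = (\<Sum>i<n. int q ^ i) - (\<Sum>i\<in>I. int q ^ i)"
  using sum.subset_diff[OF assms, of "\<lambda>i. int q ^ i"] by (simp add: lessThan_atLeast0)

theorem lemma4p1:
  fixes q n :: nat and S :: "nat set"
  assumes q_pp: "\<exists>p k. prime p \<and> k > 0 \<and> q = p ^ k"
    and n_pos: "n \<ge> 1"
    and S_sub: "S \<subseteq> {0..n}" and S_ne: "S \<noteq> {}"
    and q2: "q = 2 \<Longrightarrow> 0 \<notin> S \<and> n \<notin> S"
  shows "(\<forall>i. 0 \<le> i \<and> i < modulus q n \<longrightarrow>
            delta q n ((\<lambda>s. n - s) ` S) i = delta q n S (Qn q n - i))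
       \<and> (\<exists>k. \<forall>i. 0 \<le> i \<and> i < modulus q n \<longrightarrow>
            delta q n ((\<lambda>s. n - s) ` S) i = delta q n S (- (1 + (i + k))))"
proof -
  obtain p k where pk: "prime p" "k > 0" "q = p ^ k" using q_pp by blast
  have "p \<ge> 2" using pk prime_ge_2_nat by blast
  hence "p ^ k \<ge> p" using pk by (simp add: self_le_power)
  hence q_ge: "q \<ge> 2" using pk \<open>p \<ge> 2\<close> by linarith
  define M where "M = modulus q n"
  define Q where "Q = Qn q n"
  have Qs: "Q = (\<Sum>i<n. int q ^ i)" using Qn_sum[OF q_ge] Q_def by simp
  have MQ: "M = Q * (int q - 1)"
    unfolding M_def modulus_def Qs
    by (metis mult.commute one_diff_power_eq minus_diff_eq mult_minus_left of_nat_power)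
  have Qpos: "Q > 0"
  proof -
    have "0 \<in> {..<n}" using n_pos by simp
    hence "int q ^ 0 \<le> (\<Sum>i<n. int q ^ i)"
      by (intro member_le_sum) auto
    thus ?thesis unfolding Qs by simp
  qed
  have Q3: "q \<noteq> 2 \<Longrightarrow> Q < M"
  proof -
    assume "q \<noteq> 2"
    hence "int q - 1 \<ge> 2" using q_ge by simp
    hence "Q * 2 \<le> Q * (int q - 1)" using Qpos by (intro mult_left_mono) auto
    thus "Q < M" using MQ Qpos by linarith
  qed
  have Q2: "q = 2 \<Longrightarrow> Q = M" using MQ by simp
  have Mpos: "M > 0" using MQ Qpos q_ge by simp
  have OC: "\<And>k W. k \<in> OmegaW q n W \<longleftrightarrow> 0 \<le> k \<and> k < M \<and>
     (\<exists>I. I \<subseteq> {0..<n} \<and> card I \<in> W \<and> k = (\<Sum>i\<in>I. int q ^ i))"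
    using Omega_char[OF q_ge n_pos] M_def by simp
  have cardI: "\<And>I. I \<subseteq> {0..<n} \<Longrightarrow> card I \<le> n"
    by (metis card_atLeastLessThan card_mono finite_atLeastLessThan diff_zero)
  have cardC: "\<And>I. I \<subseteq> {0..<n} \<Longrightarrow> card ({0..<n} - I) = n - card I"
    by (simp add: card_Diff_subset finite_subset)
  have sumnn: "\<And>I. 0 \<le> (\<Sum>i\<in>I. int q ^ i)" by (simp add: sum_nonneg)
  have main: "\<And>i. 0 \<le> i \<Longrightarrow> i < M \<Longrightarrow>
      i \<in> OmegaW q n ((\<lambda>s. n - s) ` S) \<longleftrightarrow> (Q - i) mod M \<in> OmegaW q n S"
  proof -
    fix i assume i0: "0 \<le> i" and iM: "i < M"
    show "i \<in> OmegaW q n ((\<lambda>s. n - s) ` S) \<longleftrightarrow> (Q - i) mod M \<in> OmegaW q n S"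
    proof
      assume A: "i \<in> OmegaW q n ((\<lambda>s. n - s) ` S)"
      have "\<exists>I. I \<subseteq> {0..<n} \<and> card I \<in> (\<lambda>s. n - s) ` S \<and> i = (\<Sum>i\<in>I. int q ^ i)"
        using OC[of i "(\<lambda>s. n - s) ` S"] A by blast
      then obtain I where I0: "I \<subseteq> {0..<n}" "card I \<in> (\<lambda>s. n - s) ` S"
          "i = (\<Sum>i\<in>I. int q ^ i)" by blast
      then obtain s where I1: "s \<in> S" "card I = n - s" by blast
      have sn: "s \<le> n" using I1 S_sub by auto
      define J where "J = {0..<n} - I"
      have J: "J \<subseteq> {0..<n}" "card J = s" using cardC[OF I0(1)] I1 sn J_def by auto
      have sJ: "(\<Sum>i\<in>J. int q ^ i) = Q - i" using sum_compl[OF I0(1)] I0 Qs J_def by simp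
      have fI: "finite I" using I0(1) finite_subset by blast
      have lt: "Q - i < M"
      proof (cases "q = 2")
        case True
        then have "s \<noteq> n" using q2 I1 by auto
        then have "I \<noteq> {}" using I1 sn by auto
        then obtain j where j: "j \<in> I" by blast
        have "int q ^ j \<le> (\<Sum>i\<in>I. int q ^ i)"
          by (rule member_le_sum[OF j _ fI]) simp
        moreover have "int q ^ j > 0" using q_ge by simp
        ultimately show ?thesis using Q2 True I0(3) by linarith
      next
        case False then show ?thesis using Q3 i0 by linarith
      qed
      have ge: "0 \<le> Q - i" using sJ sumnn[of J] by linarith
      have md: "(Q - i) mod M = Q - i" using lt ge by simp
      have "\<exists>J. J \<subseteq> {0..<n} \<and> card J \<in> S \<and> Q - i = (\<Sum>i\<in>J. int q ^ i)"
        using J sJ I1(1) by auto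
      then have "Q - i \<in> OmegaW q n S" using OC[of "Q - i" S] lt ge by blast
      then show "(Q - i) mod M \<in> OmegaW q n S" using md by simp
    next
      assume A: "(Q - i) mod M \<in> OmegaW q n S"
      have "\<exists>J. J \<subseteq> {0..<n} \<and> card J \<in> S \<and> (Q - i) mod M = (\<Sum>i\<in>J. int q ^ i)"
        using OC[of "(Q - i) mod M" S] A by blast
      then obtain J where J: "J \<subseteq> {0..<n}" "card J \<in> S"
          "(Q - i) mod M = (\<Sum>i\<in>J. int q ^ i)" by blast
      have fJ: "finite J" using J(1) finite_subset by blast
      define I where "I = {0..<n} - J"
      have I: "I \<subseteq> {0..<n}" "card I = n - card J" using cardC[OF J(1)] I_def by auto
      have sI: "(\<Sum>i\<in>I. int q ^ i) = Q - (\<Sum>i\<in>J. int q ^ i)"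
        using sum_compl[OF J(1)] Qs I_def by simp
      have lt: "Q - (\<Sum>i\<in>J. int q ^ i) < M"
      proof (cases "q = 2")
        case True
        then have "J \<noteq> {}" using q2 J(2) by auto
        then obtain j where j: "j \<in> J" by blast
        have "int q ^ j \<le> (\<Sum>i\<in>J. int q ^ i)"
          by (rule member_le_sum[OF j _ fJ]) simp
        moreover have "int q ^ j > 0" using q_ge by simp
        ultimately show ?thesis using Q2 True by linarith
      next
        case False then show ?thesis using Q3 sumnn[of J] by linarith
      qed
      have ge: "0 \<le> Q - (\<Sum>i\<in>J. int q ^ i)" using sI sumnn[of I] by linarith
      have "(Q - (Q - i) mod M) mod M = (Q - (Q - i)) mod M" by (rule mod_diff_right_eq)
      hence "(Q - (\<Sum>i\<in>J. int q ^ i)) mod M = i mod M" using J(3) by simp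
      hence "i = Q - (\<Sum>i\<in>J. int q ^ i)" using i0 iM lt ge by simp
      then have ii: "i = (\<Sum>i\<in>I. int q ^ i)" using sI by simp
      have "card I \<in> (\<lambda>s. n - s) ` S" using I J(2) by auto
      then show "i \<in> OmegaW q n ((\<lambda>s. n - s) ` S)"
        using OC[of i "(\<lambda>s. n - s) ` S"] I(1) i0 iM ii by blast
    qed
  qed
  have P1: "\<forall>i. 0 \<le> i \<and> i < modulus q n \<longrightarrow>
            delta q n ((\<lambda>s. n - s) ` S) i = delta q n S (Qn q n - i)"
    using main unfolding delta_def M_def[symmetric] Q_def[symmetric] by auto
  have P2: "\<forall>i. 0 \<le> i \<and> i < modulus q n \<longrightarrow>
            delta q n ((\<lambda>s. n - s) ` S) i = delta q n S (- (1 + (i + (- Qn q n - 1))))"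
    using P1 by simp
  show ?thesis using P1 P2 by blast
qed

end
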